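(* Let $v = \pi \sqrt{3n/2}$, $v^+ = \pi \sqrt{3(n+1)/2}$, $v^- = \pi \sqrt{3(n-1)/2}$. For all integers $n \geq 2363$, $$\frac{v}{\sqrt{v^+ v^-}}\, \Xi(n) \leq \frac{I_2(v^-)\, I_2(v^+)}{I_2(v)^2} \leq \frac{v}{\sqrt{v^+ v^-}}\, \Psi(n),$$ where $$\Xi(n) = \left(1- \frac{9\pi^4}{16 v^3}- \frac{27 \pi^6}{8 v^5} - \frac{405 \pi^8}{2048 v^7}\right) \left( 1-\frac{309}{v^5}-\frac{535}{v^6}\right),$$ $$\Psi(n) = \left(1-\frac{9\pi^4}{16 v^3}+\frac{81 \pi^8}{256 v^6}\right) \left( 1-\frac{308}{v^5}-\frac{286}{v^6} \right).$$
   Context: $I_2$ denotes the modified Bessel function of the first kind of order 2. *)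

theory Defs
  imports Complex_Main
begin

definition besselI2 :: "real \<Rightarrow> real" where
  "besselI2 x = (\<Sum>k. (x / 2) ^ (2 * k + 2) / (fact k * fact (k + 2)))"

end

theory Submission
  imports Defs "HOL-Analysis.Analysis"
begin



definition ag :: "nat \<Rightarrow> real" where "ag n = 1 / (fact n * fact (n+2))"
definition ah :: "nat \<Rightarrow> real" where "ah n = 1 / (fact n * fact (n+1))"
definition GG :: "real \<Rightarrow> real" where "GG y = (\<Sum>n. ag n * y ^ n)"
definition HH :: "real \<Rightarrow> real" where "HH y = (\<Sum>n. ah n * y ^ n)"
definition G3 :: "real \<Rightarrow> real" where "G3 y = (\<Sum>n. diffs ag n * y ^ n)"

lemma ag_pos: "0 < ag n" by (simp add: ag_def)
lemma ah_pos: "0 < ah n" by (simp add: ah_def)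
lemma inv_aux: "0 < (a::real) \<Longrightarrow> 1 \<le> b \<Longrightarrow> 1 / (a * b) \<le> inverse a"
  by (simp add: divide_simps mult_le_cancel_left1 mult_le_cancel_left)
lemma ag_le: "ag n \<le> inverse (fact n)"
  unfolding ag_def by (rule inv_aux[OF fact_gt_zero fact_ge_1])
lemma ah_le: "ah n \<le> inverse (fact n)"
  unfolding ah_def by (rule inv_aux[OF fact_gt_zero fact_ge_1])

lemma summable_coef:
  assumes "\<And>n. 0 \<le> a n" "\<And>n. a n \<le> inverse (fact n)"
  shows "summable (\<lambda>n. a n * (y::real) ^ n)"
proof (rule summable_comparison_test'[OF summable_exp[of "\<bar>y\<bar>"]])
  fix n :: nat
  show "norm (a n * y ^ n) \<le> inverse (fact n) * \<bar>y\<bar> ^ n"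
    using assms[of n] by (simp add: abs_mult power_abs mult_right_mono)
qed

lemma summable_ag: "summable (\<lambda>n. ag n * y ^ n)"
  using summable_coef[of ag] ag_pos ag_le by (simp add: less_imp_le)
lemma summable_ah: "summable (\<lambda>n. ah n * y ^ n)"
  using summable_coef[of ah] ah_pos ah_le by (simp add: less_imp_le)

lemma canc: "0 < (c::real) \<Longrightarrow> c * (1 / ((c * a) * b)) = 1 / (a * b)"
  by simp

lemma diffs_ah: "diffs ah = ag"
proof
  fix n
  have e: "Suc n + 1 = n + 2" by simp
  have "diffs ah n = real (Suc n) * (1 / (fact (Suc n) * fact (Suc n + 1)))"
    by (simp only: diffs_def ah_def)
  also have "\<dots> = real (Suc n) * (1 / ((real (Suc n) * fact n) * fact (n + 2)))"
    by (simp only: fact_Suc[of n] e)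
  also have "\<dots> = ag n" unfolding ag_def by (rule canc) simp
  finally show "diffs ah n = ag n" .
qed

lemma diffs_ag: "diffs ag n = 1 / (fact n * fact (n+3))"
proof -
  have a: "fact (Suc n) = real (Suc n) * fact n" by simp
  have b: "Suc n + 2 = n + 3" by simp
  have "diffs ag n = real (Suc n) * (1 / (fact (Suc n) * fact (Suc n + 2)))"
    by (simp only: diffs_def ag_def)
  also have "\<dots> = real (Suc n) * (1 / ((real (Suc n) * fact n) * fact (n + 3)))"
    by (simp only: fact_Suc[of n] b)
  also have "\<dots> = 1 / (fact n * fact (n+3))" by (rule canc) simp
  finally show ?thesis .
qed

lemma summable_G3: "summable (\<lambda>n. diffs ag n * y ^ n)"
proof (rule summable_coef)
  fix n
  show "0 \<le> diffs ag n" by (simp add: diffs_ag)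
  show "diffs ag n \<le> inverse (fact n)"
    unfolding diffs_ag by (rule inv_aux[OF fact_gt_zero fact_ge_1])
qed

lemma HH_deriv: "(HH has_field_derivative GG y) (at y)"
proof -
  have "((\<lambda>x. \<Sum>n. ah n * x^n) has_field_derivative (\<Sum>n. diffs ah n * y^n)) (at y)"
    by (rule termdiffs_strong_converges_everywhere) (rule summable_ah)
  then show ?thesis unfolding HH_def[abs_def] GG_def diffs_ah .
qed

lemma GG_deriv: "(GG has_field_derivative G3 y) (at y)"
proof -
  have "((\<lambda>x. \<Sum>n. ag n * x^n) has_field_derivative (\<Sum>n. diffs ag n * y^n)) (at y)"
    by (rule termdiffs_strong_converges_everywhere) (rule summable_ag)
  then show ?thesis unfolding GG_def[abs_def] G3_def .
qed

lemma G3_id: "y * G3 y = HH y - 2 * GG y"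
proof -
  define b where "b n = ah n * y^n - 2 * (ag n * y^n)" for n
  have sb: "summable b" unfolding b_def
    by (intro summable_diff summable_mult summable_ag summable_ah)
  have "b sums (HH y - 2 * GG y)"
    unfolding b_def HH_def GG_def
    by (intro sums_diff sums_mult summable_sums summable_ag summable_ah)
  then have sum_b: "suminf b = HH y - 2 * GG y" by (rule sums_unique[symmetric])
  have b0: "b 0 = 0" by (simp add: b_def ah_def ag_def)
  have bS: "b (Suc n) = y * (diffs ag n * y ^ n)" for n
  proof -
    have a: "fact (Suc n) = real (Suc n) * fact n" by simp
    have a2: "fact (n+3) = real (n+3) * fact (Suc n + 1)" by (simp add: eval_nat_numeral)
    have a3: "fact (Suc n + 2) = fact (n+3)" by (simp add: eval_nat_numeral)
    have "b (Suc n) = (1 / (fact (Suc n) * fact (Suc n + 1)) - 2 / (fact (Suc n) * fact (n+3))) * y ^ Suc n"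
      unfolding b_def ah_def ag_def a3 by (simp add: algebra_simps)
    also have "(1::real) / (fact (Suc n) * fact (Suc n + 1)) - 2 / (fact (Suc n) * fact (n+3)) = 1 / (fact n * fact (n+3))"
    proof -
      define F where "F = (fact n :: real)"
      define F1 where "F1 = (fact (Suc n + 1) :: real)"
      have F: "F > 0" "F1 > 0" unfolding F_def F1_def by auto
      have "1 / (fact (Suc n) * fact (Suc n + 1)) - 2 / (fact (Suc n) * fact (n+3)) = 
        1 / ((real n + 1) * F * F1) - 2 / ((real n + 1) * F * ((real n + 3) * F1))"
        unfolding a2 a F_def F1_def by (simp add: algebra_simps)
      also have "\<dots> = 1 / (F * ((real n + 3) * F1))"
        using F by (simp add: divide_simps)
      finally show ?thesis unfolding a2 F_def F1_def by simp
    qed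
    finally show ?thesis unfolding diffs_ag by (simp add: algebra_simps)
  qed
  have "(\<Sum>n. b (Suc n)) = suminf b - b 0" by (rule suminf_split_head[OF sb])
  then have "suminf b = (\<Sum>n. y * (diffs ag n * y ^ n))" using b0 bS by simp
  also have "\<dots> = y * G3 y" unfolding G3_def by (rule suminf_mult[OF summable_G3])
  finally show ?thesis using sum_b by simp
qed

lemma GG_pos: assumes "0 \<le> y" shows "0 < GG y"
proof -
  have "0 < (\<Sum>n. ag n * y ^ n)"
  proof (rule suminf_pos2)
    show "summable (\<lambda>n. ag n * y ^ n)" by (rule summable_ag)
    show "0 \<le> ag n * y ^ n" for n using assms ag_pos[of n] by simp
    show "0 < ag 0 * y ^ 0" using ag_pos[of 0] by simp
  qed
  then show ?thesis unfolding GG_def .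
qed

lemma HG_nonneg: "0 \<le> y \<Longrightarrow> 0 \<le> HH y - GG y"
proof -
  assume y: "0 \<le> y"
  have "HH y - GG y = (\<Sum>n. ah n * y^n - ag n * y^n)"
    unfolding HH_def GG_def by (subst suminf_diff) (auto intro: summable_ag summable_ah)
  also have "\<dots> \<ge> 0"
  proof (rule suminf_nonneg)
    show "summable (\<lambda>n. ah n * y^n - ag n * y^n)" by (intro summable_diff summable_ag summable_ah)
    fix n
    have "fact (n+1) \<le> (fact (n+2) :: real)" by (intro fact_mono) simp
    then have "ag n \<le> ah n" unfolding ag_def ah_def
      by (intro divide_left_mono mult_left_mono) auto
    then show "0 \<le> ah n * y^n - ag n * y^n" using y by (simp add: mult_right_mono)
  qed
  finally show ?thesis .
qed




lemma GG_chain[derivative_intros]: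
  "(f has_real_derivative f') (at x within S) \<Longrightarrow> ((\<lambda>x. GG (f x)) has_real_derivative G3 (f x) * f') (at x within S)"
  by (rule DERIV_chain2[OF GG_deriv])
lemma HH_chain[derivative_intros]:
  "(f has_real_derivative f') (at x within S) \<Longrightarrow> ((\<lambda>x. HH (f x)) has_real_derivative GG (f x) * f') (at x within S)"
  by (rule DERIV_chain2[OF HH_deriv])

definition DD :: "real \<Rightarrow> real" where "DD x = x / 2 * (HH (x^2/4) - GG (x^2/4))"
definition D2 :: "real \<Rightarrow> real" where
  "D2 x = x^2/4 * GG (x^2/4) - HH (x^2/4) / 2 + 3/2 * GG (x^2/4)"

lemma besselI2_eq: "besselI2 x = x^2/4 * GG (x^2/4)"
proof -
  have t: "(x / 2) ^ (2 * k + 2) / (fact k * fact (k + 2)) = x^2/4 * (ag k * (x^2/4) ^ k)" for k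
  proof -
    have "(x / 2) ^ (2 * k + 2) = (x^2/4) * (x^2/4)^k"
      by (simp add: power_add power_mult power_divide power2_eq_square)
    then show ?thesis by (simp add: ag_def)
  qed
  show ?thesis unfolding besselI2_def t GG_def
    by (rule suminf_mult[OF summable_ag])
qed

lemma besselI2_fun: "besselI2 = (\<lambda>x. x^2/4 * GG (x^2/4))"
  using besselI2_eq by auto

lemma I2_deriv: "(besselI2 has_real_derivative DD x) (at x)"
proof -
  have "((\<lambda>x. x^2/4 * GG (x^2/4)) has_real_derivative
      (2 * x / 4) * GG (x^2/4) + x^2/4 * (G3 (x^2/4) * (2 * x / 4))) (at x)"
    by (auto intro!: derivative_eq_intros)
  moreover have "(2 * x / 4) * GG (x^2/4) + x^2/4 * (G3 (x^2/4) * (2 * x / 4)) = DD x"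
  proof -
    have "(2 * x / 4) * GG (x^2/4) + x^2/4 * (G3 (x^2/4) * (2 * x / 4)) = x/2 * (GG (x^2/4) + x^2/4 * G3 (x^2/4))"
      by (simp add: algebra_simps)
    also have "\<dots> = DD x" unfolding G3_id DD_def by simp
    finally show ?thesis .
  qed
  ultimately show ?thesis unfolding besselI2_fun by simp
qed

lemma DD_deriv: "(DD has_real_derivative D2 x) (at x)"
proof -
  have "((\<lambda>x. x / 2 * (HH (x^2/4) - GG (x^2/4))) has_real_derivative
      1/2 * (HH (x^2/4) - GG (x^2/4)) + x/2 * (GG (x^2/4) * (2 * x / 4) - G3 (x^2/4) * (2 * x / 4))) (at x)"
    by (auto intro!: derivative_eq_intros)
  moreover have "1/2 * (HH (x^2/4) - GG (x^2/4)) + x/2 * (GG (x^2/4) * (2 * x / 4) - G3 (x^2/4) * (2 * x / 4)) = D2 x"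
  proof -
    have "x^2/4 * G3 (x^2/4) = HH (x^2/4) - 2 * GG (x^2/4)" by (rule G3_id)
    then show ?thesis unfolding D2_def by (simp add: algebra_simps power2_eq_square)
  qed
  ultimately show ?thesis unfolding DD_def[abs_def] by simp
qed

lemma ODE: "x^2 * D2 x + x * DD x - (x^2 + 4) * besselI2 x = 0"
  unfolding D2_def DD_def besselI2_eq by (simp add: algebra_simps power2_eq_square)

lemma I2_nonneg: "0 \<le> besselI2 x"
  unfolding besselI2_eq using GG_pos[of "x^2/4"] by simp

lemma I2_pos: "x \<noteq> 0 \<Longrightarrow> 0 < besselI2 x"
  unfolding besselI2_eq using GG_pos[of "x^2/4"] by simp

lemma DD_nonneg: "0 \<le> x \<Longrightarrow> 0 \<le> DD x"
  unfolding DD_def using HG_nonneg[of "x^2/4"] by simp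

lemma I2_mono: "0 \<le> a \<Longrightarrow> a \<le> b \<Longrightarrow> besselI2 a \<le> besselI2 b"
  by (rule DERIV_nonneg_imp_nondecreasing[of a b]) (auto intro!: exI[of _ "DD _"] I2_deriv DD_nonneg)




lemma I2_chain[derivative_intros]:
  "(f has_real_derivative f') (at x within S) \<Longrightarrow> ((\<lambda>x. besselI2 (f x)) has_real_derivative DD (f x) * f') (at x within S)"
  by (rule DERIV_chain2[OF I2_deriv])
lemma DD_chain[derivative_intros]:
  "(f has_real_derivative f') (at x within S) \<Longrightarrow> ((\<lambda>x. DD (f x)) has_real_derivative D2 (f x) * f') (at x within S)"
  by (rule DERIV_chain2[OF DD_deriv])

lemma crude0: assumes "0 \<le> x" shows "x^3 * DD x \<le> (x^3 + 2*x^2) * besselI2 x"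
proof -
  define p where "p x = exp x * (x^3 * DD x - (x^3 + 2*x^2) * besselI2 x)" for x
  have "p x \<le> p 0"
  proof (rule DERIV_nonpos_imp_nonincreasing[OF assms])
    fix t :: real assume t: "0 \<le> t" "t \<le> x"
    have "(p has_real_derivative
      exp t * (t^3 * DD t - (t^3 + 2*t^2) * besselI2 t) +
      exp t * ((3 * t^2 * DD t + t^3 * (D2 t * 1)) - ((3*t^2 + 2*(2*t)) * besselI2 t + (t^3 + 2*t^2) * (DD t * 1)))) (at t)"
      unfolding p_def[abs_def]
      by (auto intro!: derivative_eq_intros simp: power2_eq_square)
    moreover have "exp t * (t^3 * DD t - (t^3 + 2*t^2) * besselI2 t) +
      exp t * ((3 * t^2 * DD t + t^3 * (D2 t * 1)) - ((3*t^2 + 2*(2*t)) * besselI2 t + (t^3 + 2*t^2) * (DD t * 1)))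
      = -5 * t^2 * exp t * besselI2 t + exp t * t * (t^2 * D2 t + t * DD t - (t^2 + 4) * besselI2 t)"
      by (simp add: algebra_simps power2_eq_square power3_eq_cube)
    moreover have "-5 * t^2 * exp t * besselI2 t \<le> 0"
      using I2_nonneg[of t] by (simp add: mult_nonneg_nonneg)
    ultimately show "\<exists>y. (p has_real_derivative y) (at t) \<and> y \<le> 0"
      unfolding ODE by auto
  qed
  then show ?thesis unfolding p_def by (simp add: mult_le_0_iff)
qed

lemma crude: assumes "0 < x" shows "DD x \<le> (1 + 2/x) * besselI2 x"
proof -
  have "x^3 * DD x \<le> x^3 * ((1 + 2/x) * besselI2 x)"
    using crude0[of x] assms by (simp add: algebra_simps power2_eq_square power3_eq_cube)
  then show ?thesis using assms by simp
qed




definition Ls :: "real \<Rightarrow> real" where "Ls x = 1 - 1/(2*x) + 15/(8*x^2) + 15/(8*x^3)"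
definition Us :: "real \<Rightarrow> real" where "Us x = 1 - 1/(2*x) + 15/(8*x^2) + 3/x^3"
definition wL :: "real \<Rightarrow> real" where "wL x = x - 15/(8*x) - 15/(16*x^2)"
definition wU :: "real \<Rightarrow> real" where "wU x = x - 15/(8*x) - 3/(2*x^2)"
definition EL :: "real \<Rightarrow> real" where "EL x = sqrt x * exp (wL x)"
definition EU :: "real \<Rightarrow> real" where "EU x = sqrt x * exp (wU x)"

lemma sqrt_exp_deriv:
  assumes "(w has_real_derivative wd) (at t)" "0 < t"
  shows "((\<lambda>x. sqrt x * exp (w x)) has_real_derivative sqrt t * exp (w t) * (1/(2*t) + wd)) (at t)"
proof -
  have "((\<lambda>x. sqrt x * exp (w x)) has_real_derivative inverse (sqrt t) / 2 * exp (w t) + exp (w t) * wd * sqrt t) (at t)"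
    by (rule DERIV_mult[OF DERIV_real_sqrt[OF assms(2)] DERIV_fun_exp[OF assms(1)]])
  moreover have i: "inverse (sqrt t) = sqrt t / t" 
  proof -
    have "sqrt t * sqrt t = t" using assms by simp
    then show ?thesis using assms by (simp add: field_simps)
  qed
  moreover have "inverse (sqrt t) / 2 * exp (w t) + exp (w t) * wd * sqrt t = sqrt t * exp (w t) * (1/(2*t) + wd)"
    unfolding i by (simp add: algebra_simps)
  ultimately show ?thesis by simp
qed

lemma wL_deriv: assumes "0 < t" shows "(wL has_real_derivative 1 + 15/(8*t^2) + 15/(8*t^3)) (at t)"
  unfolding wL_def[abs_def]
  apply (rule DERIV_cong)
   apply (auto intro!: derivative_eq_intros)[1]
  using assms by (auto simp: field_simps power2_eq_square power3_eq_cube)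

lemma wU_deriv: assumes "0 < t" shows "(wU has_real_derivative 1 + 15/(8*t^2) + 3/t^3) (at t)"
  unfolding wU_def[abs_def]
  apply (rule DERIV_cong)
   apply (auto intro!: derivative_eq_intros)[1]
  using assms by (auto simp: field_simps power2_eq_square power3_eq_cube)

lemma EL_deriv: assumes "0 < t" shows "(EL has_real_derivative EL t * (1/t + Ls t)) (at t)"
proof -
  have "1/(2*t) + (1 + 15/(8*t^2) + 15/(8*t^3)) = 1/t + Ls t" unfolding Ls_def using assms
    by (simp add: field_simps)
  then show ?thesis using sqrt_exp_deriv[OF wL_deriv[OF assms] assms]
    unfolding EL_def[abs_def] by simp
qed

lemma EU_deriv: assumes "0 < t" shows "(EU has_real_derivative EU t * (1/t + Us t)) (at t)"
proof -
  have "1/(2*t) + (1 + 15/(8*t^2) + 3/t^3) = 1/t + Us t" unfolding Us_def using assms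
    by (simp add: field_simps)
  then show ?thesis using sqrt_exp_deriv[OF wU_deriv[OF assms] assms]
    unfolding EU_def[abs_def] by simp
qed

lemma Ls_deriv: assumes "0 < t" shows "(Ls has_real_derivative 1/(2*t^2) - 15/(4*t^3) - 45/(8*t^4)) (at t)"
  unfolding Ls_def[abs_def]
  apply (rule DERIV_cong)
   apply (auto intro!: derivative_eq_intros)[1]
  using assms by (auto simp: field_simps power2_eq_square power3_eq_cube eval_nat_numeral)

lemma Us_deriv: assumes "0 < t" shows "(Us has_real_derivative 1/(2*t^2) - 15/(4*t^3) - 9/t^4) (at t)"
  unfolding Us_def[abs_def]
  apply (rule DERIV_cong)
   apply (auto intro!: derivative_eq_intros)[1]
  using assms by (auto simp: field_simps power2_eq_square power3_eq_cube eval_nat_numeral)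




lemma exp_big: assumes "186 \<le> (x::real)" shows "8 * x^4 \<le> exp (x - 11)"
proof -
  have "(1 + (x - 11) / real 12) ^ 12 \<le> exp (x - 11)"
    by (rule exp_ge_one_plus_x_over_n_power_n) (use assms in auto)
  moreover have "(x/13) ^ 12 \<le> (1 + (x - 11) / real 12) ^ 12"
  proof (rule power_mono)
    show "x/13 \<le> 1 + (x - 11) / real 12" using assms by (simp add: field_simps)
    show "0 \<le> x/13" using assms by simp
  qed
  moreover have "8 * x^4 \<le> (x/13) ^ 12"
  proof -
    have "(186::real)^8 \<le> x^8" by (rule power_mono) (use assms in auto)
    then have "8 * 13^12 \<le> x^8" by simp
    then have "8 * 13^12 * x^4 \<le> x^8 * x^4" by (rule mult_right_mono) simp
    then show ?thesis by (simp add: power_divide field_simps flip: power_add)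
  qed
  ultimately show ?thesis by linarith
qed

lemma D2_eq: assumes "t \<noteq> 0" shows "D2 t = (1 + 4/t^2) * besselI2 t - DD t / t"
proof -
  have h2: "t * (t * D2 t) = t * (t * besselI2 t) + besselI2 t * 4 - t * DD t"
    using ODE[of t] by (simp add: algebra_simps power2_eq_square)
  show ?thesis using assms apply (simp add: field_simps power2_eq_square) apply (simp add: h2 algebra_simps) done
qed

lemma RL_eq: assumes "0 < t" shows
  "(1/(2*t^2) - 15/(4*t^3) - 45/(8*t^4)) + Ls t / t + (Ls t)^2 - 1 - 4/t^2 = -(135*t^2 - 450*t - 225)/(64*t^6)"
  unfolding Ls_def using assms by (simp add: field_simps power2_eq_square power3_eq_cube eval_nat_numeral)

lemma RU_eq: assumes "0 < t" shows
  "1 + 4/t^2 - Us t / t - (Us t)^2 - (1/(2*t^2) - 15/(4*t^3) - 9/t^4) = (-144*t^3 + 351*t^2 - 720*t - 576)/(64*t^6)"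
  unfolding Us_def using assms by (simp add: field_simps power2_eq_square power3_eq_cube eval_nat_numeral)


lemma sq_ge: "a \<le> (x::real) \<Longrightarrow> 0 \<le> a \<Longrightarrow> a*a \<le> x*x"
  by (rule mult_mono) auto

lemma EL_bounds: assumes "186 \<le> x" shows "EL 10 * 2 * x^4 \<le> EL x"
proof -
  have "EL 10 \<le> 4 * exp 10"
  proof -
    have "sqrt 10 \<le> (4::real)" by (rule real_le_lsqrt) auto
    moreover have "wL 10 \<le> 10" unfolding wL_def by simp
    ultimately show ?thesis unfolding EL_def by (intro mult_mono) auto
  qed
  moreover have "exp (x - 1) \<le> EL x"
  proof -
    have "1 \<le> sqrt x" using assms by simp
    moreover have "x - 1 \<le> wL x"
    proof -
      have "15/(8*x) \<le> 1/2" using assms by (simp add: field_simps)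
      moreover have "15/(16*x^2) \<le> 1/2" using assms sq_ge[OF assms] by (simp add: field_simps power2_eq_square)
      ultimately show ?thesis unfolding wL_def by simp
    qed
    ultimately show ?thesis unfolding EL_def
      by (metis exp_gt_zero exp_le_cancel_iff less_le_not_le mult_le_cancel_right1 order_trans)
  qed
  moreover have "8 * x^4 * exp 10 \<le> exp (x - 1)"
  proof -
    have "8 * x^4 * exp 10 \<le> exp (x - 11) * exp 10" using exp_big[OF assms] by simp
    also have "\<dots> = exp (x - 1)" by (simp flip: exp_add)
    finally show ?thesis .
  qed
  ultimately show ?thesis
  proof -
    assume a: "EL 10 \<le> 4 * exp 10" and b: "exp (x - 1) \<le> EL x" and c: "8 * x^4 * exp 10 \<le> exp (x - 1)"
    have "EL 10 * 2 * x^4 \<le> (4 * exp 10) * 2 * x^4"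
      using a by (intro mult_right_mono) auto
    also have "\<dots> = 8 * x^4 * exp 10" by simp
    finally show ?thesis using b c by linarith
  qed
qed

lemma EU_bounds: assumes "186 \<le> x" shows "EU 10 * 2 * x^4 \<le> EU x"
proof -
  have "EU 10 \<le> 4 * exp 10"
  proof -
    have "sqrt 10 \<le> (4::real)" by (rule real_le_lsqrt) auto
    moreover have "wU 10 \<le> 10" unfolding wU_def by simp
    ultimately show ?thesis unfolding EU_def by (intro mult_mono) auto
  qed
  moreover have "exp (x - 1) \<le> EU x"
  proof -
    have "1 \<le> sqrt x" using assms by simp
    moreover have "x - 1 \<le> wU x"
    proof -
      have "15/(8*x) \<le> 1/2" using assms by (simp add: field_simps)
      moreover have "3/(2*x^2) \<le> 1/2" using assms sq_ge[OF assms] by (simp add: field_simps power2_eq_square)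
      ultimately show ?thesis unfolding wU_def by simp
    qed
    ultimately show ?thesis unfolding EU_def
      by (metis exp_gt_zero exp_le_cancel_iff less_le_not_le mult_le_cancel_right1 order_trans)
  qed
  moreover have "8 * x^4 * exp 10 \<le> exp (x - 1)"
  proof -
    have "8 * x^4 * exp 10 \<le> exp (x - 11) * exp 10" using exp_big[OF assms] by simp
    also have "\<dots> = exp (x - 1)" by (simp flip: exp_add)
    finally show ?thesis .
  qed
  ultimately show ?thesis
  proof -
    assume a: "EU 10 \<le> 4 * exp 10" and b: "exp (x - 1) \<le> EU x" and c: "8 * x^4 * exp 10 \<le> exp (x - 1)"
    have "EU 10 * 2 * x^4 \<le> (4 * exp 10) * 2 * x^4"
      using a by (intro mult_right_mono) auto
    also have "\<dots> = 8 * x^4 * exp 10" by simp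
    finally show ?thesis using b c by linarith
  qed
qed


lemma lower_fine: assumes x0: "186 \<le> x0" shows "(Ls x0 - 1/x0^4) * besselI2 x0 \<le> DD x0"
proof -
  define p where "p x = EL x * (Ls x * besselI2 x - DD x)" for x
  have "p x0 \<le> p 10"
  proof (rule DERIV_nonpos_imp_nonincreasing[of 10 x0 p])
    show "10 \<le> x0" using x0 by simp
    fix t :: real assume t: "10 \<le> t" "t \<le> x0"
    then have t0: "0 < t" by simp
    have "(p has_real_derivative
       EL t * (1/t + Ls t) * (Ls t * besselI2 t - DD t) +
       ((1/(2*t^2) - 15/(4*t^3) - 45/(8*t^4)) * besselI2 t + DD t * Ls t - D2 t) * EL t) (at t)"
      unfolding p_def[abs_def]
      by (rule DERIV_mult[OF EL_deriv[OF t0] DERIV_diff[OF DERIV_mult[OF Ls_deriv[OF t0] I2_deriv] DD_deriv]])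
    moreover have "EL t * (1/t + Ls t) * (Ls t * besselI2 t - DD t) +
       ((1/(2*t^2) - 15/(4*t^3) - 45/(8*t^4)) * besselI2 t + DD t * Ls t - D2 t) * EL t
      = EL t * besselI2 t * ((1/(2*t^2) - 15/(4*t^3) - 45/(8*t^4)) + Ls t / t + (Ls t)^2 - 1 - 4/t^2)"
    proof -
      have d2: "D2 t = (1 + 4/t^2) * besselI2 t - DD t / t" using t0 by (intro D2_eq) simp
      show ?thesis unfolding d2 using t0 by (simp add: field_simps power2_eq_square)
    qed
    moreover have "EL t * besselI2 t * ((1/(2*t^2) - 15/(4*t^3) - 45/(8*t^4)) + Ls t / t + (Ls t)^2 - 1 - 4/t^2) \<le> 0"
    proof -
      have "0 \<le> EL t" unfolding EL_def using t0 by simp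
      moreover have "0 \<le> besselI2 t" by (rule I2_nonneg)
      moreover have "-(135*t^2 - 450*t - 225)/(64*t^6) \<le> 0"
      proof -
        have "10 * t \<le> t * t" using t by (intro mult_right_mono) auto
        then have "450*t + 225 \<le> 135*t^2" unfolding power2_eq_square using t by linarith
        then show ?thesis using t0 by (simp add: divide_nonpos_pos)
      qed
      ultimately show ?thesis unfolding RL_eq[OF t0] by (intro mult_nonneg_nonpos mult_nonneg_nonneg)
    qed
    ultimately show "\<exists>y. (p has_real_derivative y) (at t) \<and> y \<le> 0" by auto
  qed
  also have "p 10 \<le> EL 10 * (Ls 10 * besselI2 10)"
    unfolding p_def using DD_nonneg[of 10] by (intro mult_left_mono) (auto simp: EL_def)
  also have "\<dots> \<le> EL 10 * (2 * besselI2 x0)"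
  proof -
    have "Ls 10 \<le> 2" "0 \<le> Ls 10" unfolding Ls_def by simp_all
    moreover have "besselI2 10 \<le> besselI2 x0" using x0 by (intro I2_mono) auto
    ultimately show ?thesis by (intro mult_left_mono mult_mono) (auto simp: EL_def I2_nonneg)
  qed
  finally have "EL x0 * (Ls x0 * besselI2 x0 - DD x0) \<le> EL 10 * 2 * besselI2 x0" unfolding p_def by simp
  also have "\<dots> \<le> EL x0 / x0^4 * besselI2 x0"
  proof -
    have "EL 10 * 2 \<le> EL x0 / x0^4" using EL_bounds[OF x0] x0 by (simp add: field_simps)
    then show ?thesis by (rule mult_right_mono) (rule I2_nonneg)
  qed
  finally have "EL x0 * (Ls x0 * besselI2 x0 - DD x0) \<le> EL x0 * (besselI2 x0 / x0^4)" by simp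
  moreover have "0 < EL x0" unfolding EL_def using x0 by simp
  ultimately have "Ls x0 * besselI2 x0 - DD x0 \<le> besselI2 x0 / x0^4"
    using mult_le_cancel_left_pos by blast
  then show ?thesis by (simp add: algebra_simps)
qed


lemma upper_fine: assumes x0: "186 \<le> x0" shows "DD x0 \<le> (Us x0 + 1/x0^4) * besselI2 x0"
proof -
  define p where "p x = EU x * (DD x - Us x * besselI2 x)" for x
  have "p x0 \<le> p 10"
  proof (rule DERIV_nonpos_imp_nonincreasing[of 10 x0 p])
    show "10 \<le> x0" using x0 by simp
    fix t :: real assume t: "10 \<le> t" "t \<le> x0"
    then have t0: "0 < t" by simp
    have "(p has_real_derivative
       EU t * (1/t + Us t) * (DD t - Us t * besselI2 t) +
       (D2 t - ((1/(2*t^2) - 15/(4*t^3) - 9/t^4) * besselI2 t + DD t * Us t)) * EU t) (at t)"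
      unfolding p_def[abs_def]
      by (rule DERIV_mult[OF EU_deriv[OF t0] DERIV_diff[OF DD_deriv DERIV_mult[OF Us_deriv[OF t0] I2_deriv]]])
    moreover have "EU t * (1/t + Us t) * (DD t - Us t * besselI2 t) +
       (D2 t - ((1/(2*t^2) - 15/(4*t^3) - 9/t^4) * besselI2 t + DD t * Us t)) * EU t
      = EU t * besselI2 t * (1 + 4/t^2 - Us t / t - (Us t)^2 - (1/(2*t^2) - 15/(4*t^3) - 9/t^4))"
    proof -
      have d2: "D2 t = (1 + 4/t^2) * besselI2 t - DD t / t" using t0 by (intro D2_eq) simp
      show ?thesis unfolding d2 using t0 by (simp add: field_simps power2_eq_square)
    qed
    moreover have "EU t * besselI2 t * (1 + 4/t^2 - Us t / t - (Us t)^2 - (1/(2*t^2) - 15/(4*t^3) - 9/t^4)) \<le> 0"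
    proof -
      have "0 \<le> EU t" unfolding EU_def using t0 by simp
      moreover have "0 \<le> besselI2 t" by (rule I2_nonneg)
      moreover have "(-144*t^3 + 351*t^2 - 720*t - 576)/(64*t^6) \<le> 0"
      proof -
        have "10 * (t * t) \<le> t * (t * t)" using t by (intro mult_right_mono) auto
        then have "10 * (t * t) \<le> t * t * t" by (simp add: mult.assoc)
        moreover have "0 \<le> t * t" by simp
        ultimately have "-144*t^3 + 351*t^2 - 720*t - 576 \<le> 0" unfolding power2_eq_square power3_eq_cube using t by linarith
        then show ?thesis using t0 by (simp add: divide_nonpos_pos)
      qed
      ultimately show ?thesis unfolding RU_eq[OF t0] by (intro mult_nonneg_nonpos mult_nonneg_nonneg)
    qed
    ultimately show "\<exists>y. (p has_real_derivative y) (at t) \<and> y \<le> 0" by auto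
  qed
  also have "p 10 \<le> EU 10 * DD 10"
  proof -
    have "0 \<le> Us 10 * besselI2 10" unfolding Us_def using I2_nonneg[of 10] by simp
    then show ?thesis unfolding p_def by (intro mult_left_mono) (auto simp: EU_def)
  qed
  also have "\<dots> \<le> EU 10 * (2 * besselI2 x0)"
  proof -
    have "DD 10 \<le> 6/5 * besselI2 10" using crude[of 10] by simp
    moreover have "besselI2 10 \<le> besselI2 x0" using x0 by (intro I2_mono) auto
    ultimately have "DD 10 \<le> 2 * besselI2 x0" using I2_nonneg[of 10] by linarith
    then show ?thesis by (intro mult_left_mono) (auto simp: EU_def)
  qed
  finally have "EU x0 * (DD x0 - Us x0 * besselI2 x0) \<le> EU 10 * 2 * besselI2 x0" unfolding p_def by simp
  also have "\<dots> \<le> EU x0 / x0^4 * besselI2 x0"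
  proof -
    have "EU 10 * 2 \<le> EU x0 / x0^4" using EU_bounds[OF x0] x0 by (simp add: field_simps)
    then show ?thesis by (rule mult_right_mono) (rule I2_nonneg)
  qed
  finally have "EU x0 * (DD x0 - Us x0 * besselI2 x0) \<le> EU x0 * (besselI2 x0 / x0^4)" by simp
  moreover have "0 < EU x0" unfolding EU_def using x0 by simp
  ultimately have "DD x0 - Us x0 * besselI2 x0 \<le> besselI2 x0 / x0^4"
    using mult_le_cancel_left_pos by blast
  then show ?thesis by (simp add: algebra_simps)
qed




lemma second_diff_upper:
  fixes f f1 f2 :: "real \<Rightarrow> real"
  assumes h: "0 < h"
    and d1: "\<And>t. a - h \<le> t \<Longrightarrow> t \<le> a + h \<Longrightarrow> (f has_real_derivative f1 t) (at t)"
    and d2: "\<And>t. a - h \<le> t \<Longrightarrow> t \<le> a + h \<Longrightarrow> (f1 has_real_derivative f2 t) (at t)"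
    and b: "\<And>t. a - h \<le> t \<Longrightarrow> t \<le> a + h \<Longrightarrow> f2 t \<le> M"
  shows "f (a + h) + f (a - h) - 2 * f a \<le> M * h^2"
proof -
  define phi where "phi u = f (a + u) + f (a - u) - 2 * f a - M * u^2" for u
  define psi where "psi u = f1 (a + u) - f1 (a - u) - 2 * M * u" for u
  have dphi: "(phi has_real_derivative psi u) (at u)" if "0 \<le> u" "u \<le> h" for u
  proof -
    have a1: "((\<lambda>u. f (a + u)) has_real_derivative f1 (a + u) * 1) (at u)"
      by (rule DERIV_chain2[OF d1]) (use that in \<open>auto intro!: derivative_eq_intros\<close>)
    have a2: "((\<lambda>u. f (a - u)) has_real_derivative f1 (a - u) * (-1)) (at u)"
      by (rule DERIV_chain2[OF d1]) (use that in \<open>auto intro!: derivative_eq_intros\<close>)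
    have "(phi has_real_derivative f1 (a + u) * 1 + f1 (a - u) * (-1) - 0 - M * (2 * u)) (at u)"
      unfolding phi_def[abs_def]
      apply (rule DERIV_diff[OF DERIV_diff[OF DERIV_add[OF a1 a2]]])
       apply (rule DERIV_const)
      apply (rule DERIV_cmult)
      apply (rule DERIV_cong[OF DERIV_pow]) apply simp
      done
    then show ?thesis unfolding psi_def by (simp add: algebra_simps)
  qed
  have dpsi: "(psi has_real_derivative f2 (a + u) + f2 (a - u) - 2 * M) (at u)" if "0 \<le> u" "u \<le> h" for u
  proof -
    have a1: "((\<lambda>u. f1 (a + u)) has_real_derivative f2 (a + u) * 1) (at u)"
      by (rule DERIV_chain2[OF d2]) (use that in \<open>auto intro!: derivative_eq_intros\<close>)
    have a2: "((\<lambda>u. f1 (a - u)) has_real_derivative f2 (a - u) * (-1)) (at u)"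
      by (rule DERIV_chain2[OF d2]) (use that in \<open>auto intro!: derivative_eq_intros\<close>)
    have "(psi has_real_derivative f2 (a + u) * 1 - f2 (a - u) * (-1) - 2 * M * 1) (at u)"
      unfolding psi_def[abs_def]
      by (rule DERIV_diff[OF DERIV_diff[OF a1 a2] DERIV_cmult[OF DERIV_ident]])
    then show ?thesis by simp
  qed
  have psi_le: "psi u \<le> 0" if "0 \<le> u" "u \<le> h" for u
  proof -
    have "psi u \<le> psi 0"
    proof (rule DERIV_nonpos_imp_nonincreasing[of 0 u psi])
      show "0 \<le> u" by fact
      fix t assume "0 \<le> t" "t \<le> u"
      then have t: "0 \<le> t" "t \<le> h" using that by auto
      have "f2 (a + t) \<le> M" "f2 (a - t) \<le> M" using b t h by auto
      then show "\<exists>y. (psi has_real_derivative y) (at t) \<and> y \<le> 0"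
        using dpsi[OF t] by (intro exI[of _ "f2 (a + t) + f2 (a - t) - 2 * M"]) auto
    qed
    then show ?thesis unfolding psi_def by simp
  qed
  have "phi h \<le> phi 0"
  proof (rule DERIV_nonpos_imp_nonincreasing[of 0 h phi])
    show "0 \<le> h" using h by simp
    fix t assume t: "0 \<le> t" "t \<le> h"
    then show "\<exists>y. (phi has_real_derivative y) (at t) \<and> y \<le> 0"
      using dphi[OF t] psi_le[OF t] by auto
  qed
  then show ?thesis unfolding phi_def by simp
qed

lemma second_diff_lower:
  fixes f f1 f2 :: "real \<Rightarrow> real"
  assumes h: "0 < h"
    and d1: "\<And>t. a - h \<le> t \<Longrightarrow> t \<le> a + h \<Longrightarrow> (f has_real_derivative f1 t) (at t)"
    and d2: "\<And>t. a - h \<le> t \<Longrightarrow> t \<le> a + h \<Longrightarrow> (f1 has_real_derivative f2 t) (at t)"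
    and b: "\<And>t. a - h \<le> t \<Longrightarrow> t \<le> a + h \<Longrightarrow> m \<le> f2 t"
  shows "m * h^2 \<le> f (a + h) + f (a - h) - 2 * f a"
proof -
  have "(\<lambda>t. - f t) (a + h) + (\<lambda>t. - f t) (a - h) - 2 * (\<lambda>t. - f t) a \<le> (-m) * h^2"
  proof (rule second_diff_upper[OF h])
    fix t assume t: "a - h \<le> t" "t \<le> a + h"
    show "((\<lambda>t. - f t) has_real_derivative - f1 t) (at t)" by (rule DERIV_minus[OF d1[OF t]])
    show "((\<lambda>t. - f1 t) has_real_derivative - f2 t) (at t)" by (rule DERIV_minus[OF d2[OF t]])
    show "- f2 t \<le> - m" using b[OF t] by simp
  qed
  then show ?thesis by simp
qed






definition NN :: "real \<Rightarrow> real \<Rightarrow> real" where "NN x r = x + 1 + 3/x - 2*r - x*r^2"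

lemma pow_facts: assumes "186 \<le> (x::real)"
  shows "186 * x^4 \<le> x^5" "186 * x^3 \<le> x^4" "186 * x^2 \<le> x^3" "186 * x \<le> x^2" "0 \<le> x^2" "0 \<le> x^3" "0 \<le> x^4"
proof -
  have x0: "0 \<le> x" using assms by simp
  show "186 * x^4 \<le> x^5" using mult_right_mono[OF assms, of "x^4"] x0 by (simp add: power_Suc[symmetric] mult.commute)
  show "186 * x^3 \<le> x^4" using mult_right_mono[OF assms, of "x^3"] x0 by (simp add: power_Suc[symmetric] mult.commute)
  show "186 * x^2 \<le> x^3" using mult_right_mono[OF assms, of "x^2"] x0 by (simp add: power_Suc[symmetric] mult.commute)
  show "186 * x \<le> x^2" using mult_right_mono[OF assms, of "x"] x0 by (simp add: power2_eq_square)
  show "0 \<le> x^2" "0 \<le> x^3" "0 \<le> x^4" using x0 by simp_all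
qed

lemma NN_mono: assumes "0 < x" "L \<le> r" "0 \<le> L + r" shows "NN x r \<le> NN x L"
proof -
  have "NN x r - NN x L = -((r - L) * (2 + x * (L + r)))"
    unfolding NN_def by (simp add: algebra_simps power2_eq_square)
  moreover have "0 \<le> (r - L) * (2 + x * (L + r))"
    using assms by (intro mult_nonneg_nonneg) auto
  ultimately show ?thesis by linarith
qed

lemma NN_L: assumes x: "186 \<le> x" shows "NN x (Ls x - 1/x^4) \<le> -(45/8)/x^2"
proof -
  have x0: "0 < x" using x by simp
  have e: "NN x (Ls x - 1/x^4) = (-360*x^5 - 217*x^4 - 386*x^3 + 15*x^2 + 240*x - 64)/(64*x^7)"
    unfolding NN_def Ls_def using x0 by (simp add: field_simps power2_eq_square power3_eq_cube eval_nat_numeral)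
  have "-217*x^4 - 386*x^3 + 15*x^2 + 240*x - 64 \<le> 0" using pow_facts[OF x] x by linarith
  then have "(-360*x^5 - 217*x^4 - 386*x^3 + 15*x^2 + 240*x - 64)/(64*x^7) \<le> (-360*x^5)/(64*x^7)"
    using x0 by (intro divide_right_mono) auto
  also have "\<dots> = -(45/8)/x^2" using x0 by (simp add: field_simps eval_nat_numeral)
  finally show ?thesis unfolding e .
qed

lemma NN_U: assumes x: "186 \<le> x" shows "-8/x^2 \<le> NN x (Us x + 1/x^4)"
proof -
  have x0: "0 < x" using x by simp
  have e: "NN x (Us x + 1/x^4) = (-504*x^5 - 545*x^4 - 784*x^3 - 816*x^2 - 384*x - 64)/(64*x^7)"
    unfolding NN_def Us_def using x0 by (simp add: field_simps power2_eq_square power3_eq_cube eval_nat_numeral)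
  have "-512*x^5 \<le> -504*x^5 - 545*x^4 - 784*x^3 - 816*x^2 - 384*x - 64" using pow_facts[OF x] x by linarith
  then have "(-512*x^5)/(64*x^7) \<le> (-504*x^5 - 545*x^4 - 784*x^3 - 816*x^2 - 384*x - 64)/(64*x^7)"
    using x0 by (intro divide_right_mono) auto
  moreover have "(-512*x^5)/(64*x^7) = -8/x^2" using x0 by (simp add: field_simps eval_nat_numeral)
  ultimately show ?thesis unfolding e by simp
qed

lemma r_lower: assumes x: "186 \<le> x" shows "Ls x - 1/x^4 \<le> DD x / besselI2 x"
  using lower_fine[OF x] I2_pos[of x] x by (simp add: field_simps)

lemma r_upper: assumes x: "186 \<le> x" shows "DD x / besselI2 x \<le> Us x + 1/x^4"
  using upper_fine[OF x] I2_pos[of x] x by (simp add: field_simps)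

lemma L_nonneg: assumes x: "186 \<le> x" shows "0 \<le> Ls x - 1/x^4"
proof -
  have x0: "0 < x" using x by simp
  have e: "Ls x - 1/x^4 = (8*x^4 - 4*x^3 + 15*x^2 + 15*x - 8)/(8*x^4)"
    unfolding Ls_def using x0 by (simp add: field_simps power2_eq_square power3_eq_cube eval_nat_numeral)
  have "0 \<le> 8*x^4 - 4*x^3 + 15*x^2 + 15*x - 8" using pow_facts[OF x] x by linarith
  then show ?thesis unfolding e using x0 by simp
qed


definition Phi :: "real \<Rightarrow> real" where "Phi s = ln (besselI2 (sqrt s)) - sqrt s + ln s / 4"
definition PhiB :: "real \<Rightarrow> real" where
  "PhiB s = DD (sqrt s) / (2 * sqrt s * besselI2 (sqrt s)) - 1/(2 * sqrt s) + 1/(4 * s)"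
definition PhiC :: "real \<Rightarrow> real" where
  "PhiC s = NN (sqrt s) (DD (sqrt s) / besselI2 (sqrt s)) / (4 * sqrt s ^ 3)"

lemma Phi_deriv: assumes s: "0 < s" shows "(Phi has_real_derivative PhiB s) (at s)"
  unfolding Phi_def[abs_def]
  apply (rule DERIV_cong)
   apply (auto intro!: derivative_eq_intros)[1]
  using s I2_pos[of "sqrt s"] apply simp_all
  unfolding PhiB_def using s I2_pos[of "sqrt s"]
  apply (simp add: field_simps)
  done

lemma PhiC_alg:
  assumes x: "0 < x" and I: "0 < I" and s: "s = x^2" and d2: "E = (1 + 4/x^2) * I - D / x"
  shows "(E * (inverse x * (x * I)) - D * (inverse x * I + D)) / (4 * (x * (I * (x * I)))) +
       inverse x / (4 * s) - 1 / (4 * (s * s)) = NN x (D / I) / (4 * x^3)"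
  unfolding s d2 NN_def using x I by (simp add: field_simps power2_eq_square power3_eq_cube)

lemma PhiB_deriv: assumes s: "0 < s" shows "(PhiB has_real_derivative PhiC s) (at s)"
  unfolding PhiB_def[abs_def]
  apply (rule DERIV_cong)
   apply (auto intro!: derivative_eq_intros)[1]
  using s I2_pos[of "sqrt s"] apply simp_all
  unfolding PhiC_def
  apply (rule PhiC_alg)
  using s I2_pos[of "sqrt s"] apply auto
  using D2_eq[of "sqrt s"] s by simp

lemma PhiC_upper: assumes x: "186 \<le> sqrt s" shows "PhiC s \<le> -(45/32)/(sqrt s)^5"
proof -
  define x where "x = sqrt s"
  have x1: "186 \<le> x" using x unfolding x_def by auto
  then have x0: "0 < x" by simp
  have "NN x (DD x / besselI2 x) \<le> NN x (Ls x - 1/x^4)"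
  proof (rule NN_mono[OF x0 r_lower[OF x1]])
    have "0 \<le> DD x / besselI2 x" using DD_nonneg[of x] I2_pos[of x] x0 by simp
    then show "0 \<le> Ls x - 1 / x ^ 4 + DD x / besselI2 x" using L_nonneg[OF x1] by linarith
  qed
  also have "\<dots> \<le> -(45/8)/x^2" by (rule NN_L[OF x1])
  finally have "NN x (DD x / besselI2 x) / (4 * x^3) \<le> (-(45/8)/x^2) / (4 * x^3)"
    using x0 by (intro divide_right_mono) auto
  also have "\<dots> = -(45/32)/x^5" using x0 by (simp add: field_simps eval_nat_numeral)
  finally show ?thesis unfolding PhiC_def x_def .
qed

lemma PhiC_lower: assumes x: "186 \<le> sqrt s" shows "-2/(sqrt s)^5 \<le> PhiC s"
proof -
  define x where "x = sqrt s"
  have x1: "186 \<le> x" using x unfolding x_def by auto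
  then have x0: "0 < x" by simp
  have r0: "0 \<le> DD x / besselI2 x" using DD_nonneg[of x] I2_pos[of x] x0 by simp
  have "-8/x^2 \<le> NN x (Us x + 1/x^4)" by (rule NN_U[OF x1])
  also have "NN x (Us x + 1/x^4) \<le> NN x (DD x / besselI2 x)"
    using NN_mono[OF x0 r_upper[OF x1]] r0 r_upper[OF x1] by linarith
  finally have "(-8/x^2) / (4 * x^3) \<le> NN x (DD x / besselI2 x) / (4 * x^3)"
    using x0 by (intro divide_right_mono) auto
  moreover have "(-8/x^2) / (4 * x^3) = -2/x^5" using x0 by (simp add: field_simps eval_nat_numeral)
  ultimately show ?thesis unfolding PhiC_def x_def by simp
qed




lemma exp_le_quad: assumes "y \<le> (0::real)" shows "exp y \<le> 1 + y + y^2/2"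
proof -
  define g where "g z = 1 + z + z^2/2 - exp z" for z :: real
  have "g 0 \<le> g y"
  proof (rule DERIV_nonpos_imp_nonincreasing[of y 0 g])
    show "y \<le> 0" by fact
    fix t :: real assume t: "y \<le> t" "t \<le> 0"
    have "(g has_real_derivative 1 + t - exp t) (at t)"
      unfolding g_def[abs_def]
      apply (rule DERIV_cong)
       apply (auto intro!: derivative_eq_intros)[1]
      by simp
    moreover have "1 + t - exp t \<le> 0" using exp_ge_add_one_self[of t] by linarith
    ultimately show "\<exists>z. (g has_real_derivative z) (at t) \<and> z \<le> 0" by blast
  qed
  then show ?thesis unfolding g_def by simp
qed

lemma quad_mono: assumes "-1 \<le> d" "d \<le> -a" "a \<le> 1" shows "1 + d + d^2/2 \<le> 1 - a + a^2/(2::real)"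
proof -
  have "(1 - a + a^2/2) - (1 + d + d^2/2) = (-a - d) * (1 + (d - a)/2)"
    by (simp add: algebra_simps power2_eq_square)
  moreover have "0 \<le> (-a - d) * (1 + (d - a)/2)"
  proof (rule mult_nonneg_nonneg)
    show "0 \<le> -a - d" using assms by linarith
    have "0 \<le> 2 + (d - a)" using assms by linarith
    then show "0 \<le> 1 + (d - a)/2" by (simp add: field_simps)
  qed
  ultimately show ?thesis by linarith
qed

lemma pm_upper:
  fixes p m e :: real
  assumes p: "0 \<le> p" "p^2 = 1 + e" and m: "0 \<le> m" "m^2 = 1 - e" and e: "0 \<le> e" "e \<le> 1"
  shows "p + m \<le> 2 - e^2/4"
proof -
  have "(p*m)^2 = p^2 * m^2" by (rule power_mult_distrib)
  also have "\<dots> = (1 + e) * (1 - e)" using p m by simp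
  also have "\<dots> \<le> (1 - e^2/2)^2"
  proof -
    have "(1 - e^2/2)^2 = (1 + e) * (1 - e) + e^4/4" by (simp add: algebra_simps power2_eq_square eval_nat_numeral)
    moreover have "0 \<le> e^4" by simp
    ultimately show ?thesis by linarith
  qed
  finally have pm: "p * m \<le> 1 - e^2/2"
  proof (rule power2_le_imp_le)
    have "e^2 \<le> 1" using e by (simp add: power_le_one)
    then show "0 \<le> 1 - e^2/2" by simp
  qed
  have "(p + m)^2 = 2 + 2 * (p * m)" using p m by (simp add: algebra_simps power2_eq_square)
  also have "\<dots> \<le> (2 - e^2/4)^2"
  proof -
    have "(2 - e^2/4)^2 = 4 - e^2 + e^4/16" by (simp add: algebra_simps power2_eq_square eval_nat_numeral)
    moreover have "0 \<le> e^4" by simp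
    ultimately show ?thesis using pm by linarith
  qed
  finally show ?thesis
  proof (rule power2_le_imp_le)
    have "e^2 \<le> 1" using e by (simp add: power_le_one)
    then show "0 \<le> 2 - e^2/4" by simp
  qed
qed

lemma pm_lower:
  fixes p m e :: real
  assumes p: "0 \<le> p" "p^2 = 1 + e" and m: "0 \<le> m" "m^2 = 1 - e" and e: "0 \<le> e" "e \<le> 1/2"
  shows "2 - e^2/4 - e^4/2 \<le> p + m"
proof -
  define a where "a = e^2"
  have a: "0 \<le> a" "a \<le> 1/4" unfolding a_def using e power_mono[of e "1/2" 2] by (auto simp: power2_eq_square)
  have "(1 - a/2 - a^2/2)^2 \<le> 1 - a"
  proof -
    have "(1 - a/2 - a^2/2)^2 = 1 - a - (3/4)*a^2 + a^3/2 + a^4/4"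
      by (simp add: algebra_simps power2_eq_square power3_eq_cube eval_nat_numeral)
    moreover have "a^3 \<le> a^2/4" "a^4 \<le> a^2/16"
    proof -
      have "a^3 = a * a^2" by (simp add: power3_eq_cube power2_eq_square)
      also have "\<dots> \<le> (1/4) * a^2" using a by (intro mult_right_mono) auto
      finally show "a^3 \<le> a^2/4" by simp
      have "a^4 = a^2 * a^2" by (simp add: eval_nat_numeral)
      also have "\<dots> \<le> (1/16) * a^2"
      proof (intro mult_right_mono)
        show "a^2 \<le> 1/16" using a power_mono[of a "1/4" 2] by (simp add: power2_eq_square)
      qed simp
      finally show "a^4 \<le> a^2/16" by simp
    qed
    moreover have "0 \<le> a^2" by simp
    ultimately show ?thesis by linarith
  qed
  also have "1 - a = (p*m)^2"
  proof -
    have "(p*m)^2 = p^2 * m^2" by (rule power_mult_distrib)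
    also have "\<dots> = (1 + e) * (1 - e)" using p m by simp
    finally show ?thesis unfolding a_def by (simp add: algebra_simps power2_eq_square)
  qed
  finally have pm: "1 - a/2 - a^2/2 \<le> p * m"
    by (rule power2_le_imp_le) (use p m in simp)
  have "(2 - a/4 - a^2/2)^2 \<le> 4 - a - a^2"
  proof -
    have "(2 - a/4 - a^2/2)^2 = 4 - a - 2*a^2 + a^2/16 + a^3/4 + a^4/4"
      by (simp add: algebra_simps power2_eq_square power3_eq_cube eval_nat_numeral)
    moreover have "a^3 \<le> a^2" "a^4 \<le> a^2"
    proof -
      have "a^3 = a * a^2" by (simp add: power3_eq_cube power2_eq_square)
      also have "\<dots> \<le> 1 * a^2" using a by (intro mult_right_mono) auto
      finally show "a^3 \<le> a^2" by simp
      have "a^4 = a^2 * a^2" by (simp add: eval_nat_numeral)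
      also have "\<dots> \<le> 1 * a^2"
      proof (intro mult_right_mono)
        show "a^2 \<le> 1" using a power_mono[of a "1/4" 2] by (simp add: power2_eq_square)
      qed simp
      finally show "a^4 \<le> a^2" by simp
    qed
    moreover have "0 \<le> a^2" by simp
    ultimately show ?thesis by linarith
  qed
  also have "4 - a - a^2 \<le> (p + m)^2"
  proof -
    have "(p + m)^2 = 2 + 2 * (p * m)" using p m by (simp add: algebra_simps power2_eq_square)
    then show ?thesis using pm by simp
  qed
  finally have "2 - a/4 - a^2/2 \<le> p + m" by (rule power2_le_imp_le) (use p m in simp)
  moreover have "a^2 = e^4" unfolding a_def by (simp flip: power_mult)
  ultimately show ?thesis using a_def by linarith
qed

lemma p_upper: assumes "0 \<le> e" "p^2 = 1 + e" shows "p \<le> 1 + e/(2::real)"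
proof (rule power2_le_imp_le)
  show "p^2 \<le> (1 + e/2)^2" using assms by (simp add: algebra_simps power2_eq_square)
  show "0 \<le> 1 + e/2" using assms by simp
qed

lemma m_lower: assumes "0 \<le> e" "e \<le> 1" "0 \<le> m" "m^2 = 1 - e" shows "1 - e \<le> (m::real)"
proof (rule power2_le_imp_le)
  have "e * e \<le> 1 * e" using assms by (intro mult_right_mono) auto
  then show "(1 - e)^2 \<le> m^2" using assms by (simp add: algebra_simps power2_eq_square)
  show "0 \<le> m" by fact
qed

lemma bern5: assumes "0 \<le> e" "e \<le> 2/5" shows "(1 + e/2)^5 * (1 - 5*e/2) \<le> (1::real)"
proof -
  have "(2 + e)^5 * (2 - 5*e) = 64 - 240*e^2 - 320*e^3 - 180*e^4 - 48*e^5 - 5*e^6"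
    by (simp add: eval_nat_numeral algebra_simps)
  moreover have "0 \<le> e^2" "0 \<le> e^3" "0 \<le> e^4" "0 \<le> e^5" "0 \<le> e^6" using assms by simp_all
  ultimately have "(2 + e)^5 * (2 - 5*e) \<le> 64" by linarith
  moreover have "(1 + e/2)^5 * (1 - 5*e/2) = (2 + e)^5 * (2 - 5*e) / 64"
    by (simp add: field_simps power_divide)
  ultimately show ?thesis by simp
qed

lemma bern5m: assumes "0 \<le> (e::real)" "e \<le> 1" shows "1 - 5*e \<le> (1 - e)^5"
  using Bernoulli_inequality[of "-e" 5] assms by simp




lemma tpow: assumes "0 < t" "t \<le> 1/(186::real)"
  shows "t^6 \<le> t^5/186" "t^7 \<le> t^6/186" "t^10 \<le> t^6/186" "0 \<le> t^5" "0 \<le> t^6" "0 \<le> t^7" "0 \<le> t^10"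
    "t^5 \<le> 1/222620278176" "t^2 \<le> 1/34596"
proof -
  have t0: "0 \<le> t" using assms by simp
  have t1: "t \<le> 1" using assms by simp
  show "t^6 \<le> t^5/186" using mult_left_mono[OF assms(2), of "t^5"] t0 by (simp add: power_Suc2[symmetric] del: power_Suc)
  show "t^7 \<le> t^6/186" using mult_left_mono[OF assms(2), of "t^6"] t0 by (simp add: power_Suc2[symmetric] del: power_Suc)
  have "t^10 = t^6 * t^4" by (simp flip: power_add)
  also have "\<dots> \<le> t^6 * t" using t0 t1 by (intro mult_left_mono) (auto simp: power_le_one power_decreasing[of 1 4 t, simplified])
  also have "\<dots> \<le> t^6 * (1/186)" using assms by (intro mult_left_mono) auto
  finally show "t^10 \<le> t^6/186" by simp
  show "0 \<le> t^5" "0 \<le> t^6" "0 \<le> t^7" "0 \<le> t^10" using t0 by simp_all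
  show "t^5 \<le> 1/222620278176" using power_mono[OF assms(2) t0, of 5] by (simp add: power_divide)
  show "t^2 \<le> 1/34596" using power_mono[OF assms(2) t0, of 2] by (simp add: power_divide)
qed


lemma UF:
  fixes t a b beta gamma :: real
  assumes t: "0 < t" "t \<le> 1/186"
    and a: "54 * t^3 \<le> a" "a \<le> 1/2"
    and be: "308 \<le> beta" "beta \<le> 309"
    and ga: "0 \<le> gamma" "gamma \<le> 11500"
    and b: "b = -beta*t^5 + gamma*t^7" "b \<le> 0"
  shows "(1 - a + a^2/2) * (1 + b + b^2/2) \<le> (1 - a + a^2) * (1 - 308*t^5 - 286*t^6)"
proof -
  note tp = tpow[OF t]
  define X where "X = 1 - a + a^2/2"
  define Q where "Q = 1 - 308*t^5 - 286*t^6"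
  define W where "W = 1 + b + b^2/2"
  have a0: "0 \<le> a" using a t by (smt (verit) zero_le_power)
  have aa: "a^2 \<le> a" using a0 a by (simp add: power2_eq_square mult_le_cancel_left1 mult_right_le_one_le)
  have X01: "0 \<le> X" "X \<le> 1" unfolding X_def using aa a a0 by auto
  have Q1: "1/2 \<le> Q" unfolding Q_def using tp by simp
  have bsq: "b^2 \<le> 309^2 * t^10"
  proof -
    have "-beta*t^5 \<le> b" using b be ga tp by (simp add: mult_nonneg_nonneg)
    then have "\<bar>b\<bar> \<le> beta * t^5" using b by simp
    also have "\<dots> \<le> 309 * t^5" using be tp by (intro mult_right_mono) auto
    finally have "\<bar>b\<bar> \<le> 309 * t^5" .
    then have "\<bar>b\<bar>^2 \<le> (309 * t^5)^2" by (intro power_mono) auto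
    then show ?thesis by (simp add: power_mult_distrib flip: power_mult)
  qed
  then have bsq': "b^2 \<le> 95481 * t^10" by simp
  have b1: "b = gamma*t^7 - beta*t^5" using b by simp
  have bt5: "308 * t^5 \<le> beta * t^5" using be tp by (intro mult_right_mono) auto
  have gt7: "gamma * t^7 \<le> 11500 * t^7" using ga tp by (intro mult_right_mono) auto
  have QW: "-286*t^6 - 11500*t^7 - 47741*t^10 \<le> Q - W"
    unfolding Q_def W_def using b1 bt5 gt7 bsq' tp by linarith
  have a2: "2916 * t^6 \<le> a^2"
  proof -
    have "(54 * t^3)^2 \<le> a^2" using a t by (intro power_mono) auto
    then show ?thesis by (simp add: power_mult_distrib flip: power_mult)
  qed
  have key: "0 \<le> X * (Q - W) + (a^2/2) * Q"
  proof (cases "0 \<le> Q - W")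
    case True
    then show ?thesis using X01 Q1 by (intro add_nonneg_nonneg mult_nonneg_nonneg) auto
  next
    case False
    then have "Q - W \<le> X * (Q - W)" using X01 by (simp add: mult_le_cancel_right1)
    moreover have "729 * t^6 \<le> (a^2/2) * Q"
    proof -
      have "(2916 * t^6 / 2) * (1/2) \<le> (a^2/2) * Q" using a2 Q1 tp by (intro mult_mono) auto
      then show ?thesis by simp
    qed
    ultimately show ?thesis using QW tp by linarith
  qed
  have "(1 - a + a^2) * Q - X * W = X * (Q - W) + (a^2/2) * Q"
    unfolding X_def by (simp add: field_simps)
  then show ?thesis using key unfolding X_def W_def Q_def by linarith
qed


lemma LF:
  fixes t a k C3 C4 :: real
  assumes t: "0 < t" "t \<le> 1/186"
    and a: "0 \<le> a" "a \<le> 1/2"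
    and k: "0 \<le> k" "k \<le> 25000"
    and C3: "3000 \<le> C3" and C4: "0 \<le> C4"
  shows "(1 - a - C3*t^5 - (5/128)*C4*t^7) * (1 - 309*t^5 - 535*t^6) \<le> (1 - a - k*t^7) * (1 - 490*t^5)"
proof -
  note tp = tpow[OF t]
  define P where "P = 1 - a - k*t^7"
  define F where "F = 1 - a - C3*t^5 - (5/128)*C4*t^7"
  define Q where "Q = 1 - 309*t^5 - 535*t^6"
  have kt: "k * t^7 \<le> 25000 * t^7" using k tp by (intro mult_right_mono) auto
  have t7: "t^7 \<le> t^5 / 34596" using tp by linarith
  have kt0: "0 \<le> k * t^7" using k tp by simp
  have P01: "0 \<le> P" "P \<le> 1" unfolding P_def using a kt kt0 tp by linarith+
  have R01: "0 \<le> 1 - 490*t^5" "1 - 490*t^5 \<le> 1" using tp by linarith+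
  have Q01: "0 \<le> Q" "Q \<le> 1" unfolding Q_def using tp by linarith+
  have ours: "P - 490*t^5 \<le> P * (1 - 490*t^5)"
  proof -
    have "490*t^5 * P \<le> 490*t^5 * 1" using P01 tp by (intro mult_left_mono) auto
    then show ?thesis by (simp add: algebra_simps)
  qed
  have ours0: "0 \<le> P * (1 - 490*t^5)" using P01 R01 by simp
  have c3t: "3000 * t^5 \<le> C3 * t^5" using C3 tp by (intro mult_right_mono) auto
  have c4t: "0 \<le> C4 * t^7" using C4 tp by simp
  have "F * Q \<le> P * (1 - 490*t^5)"
  proof (cases "0 \<le> F")
    case True
    then have "F * Q \<le> F * 1" using Q01 by (intro mult_left_mono) auto
    also have "F \<le> P - 490*t^5" unfolding F_def P_def using c3t c4t kt t7 tp by linarith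
    finally show ?thesis using ours by simp
  next
    case False
    then have "F * Q \<le> 0" using Q01 by (simp add: mult_nonpos_nonneg)
    then show ?thesis using ours0 by linarith
  qed
  then show ?thesis unfolding F_def Q_def P_def .
qed




lemma exp_ln_quarter: assumes "0 < x" shows "exp (ln (x^2) / 4) = sqrt x"
proof -
  have "ln (x^2) / 4 = (1/2) * ln x" using assms by (simp add: ln_realpow)
  then have "exp (ln (x^2) / 4) = x powr (1/2)" using assms by (simp add: powr_def)
  also have "\<dots> = sqrt x" using assms by (simp add: powr_half_sqrt)
  finally show ?thesis .
qed

lemma I2_exp: assumes "0 < x" shows "besselI2 x = exp (Phi (x^2) + x) / sqrt x"
proof -
  have "Phi (x^2) + x = ln (besselI2 x) + ln (x^2) / 4"
    unfolding Phi_def using assms by simp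
  then have "exp (Phi (x^2) + x) = besselI2 x * sqrt x"
    using assms I2_pos[of x] by (simp add: exp_add exp_ln_quarter)
  then show ?thesis using assms by simp
qed

lemma ratio_eq:
  assumes "0 < vm" "0 < vp" "0 < v"
  shows "besselI2 vm * besselI2 vp / (besselI2 v)^2 =
    v / sqrt (vp * vm) * (exp (Phi (vp^2) + Phi (vm^2) - 2 * Phi (v^2)) * exp (vp + vm - 2 * v))"
proof -
  define A where "A = Phi (vm^2) + vm"
  define B where "B = Phi (vp^2) + vp"
  define C where "C = Phi (v^2) + v"
  have "besselI2 vm * besselI2 vp / (besselI2 v)^2 = (exp A / sqrt vm) * (exp B / sqrt vp) / (exp C / sqrt v)^2"
    unfolding A_def B_def C_def using assms by (simp add: I2_exp)
  also have "\<dots> = (exp A * exp B / (exp C)^2) * (v / (sqrt vm * sqrt vp))"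
    using assms by (simp add: field_simps power2_eq_square)
  also have "exp A * exp B / (exp C)^2 = exp (A + B - 2 * C)"
  proof -
    have "exp (2 * C) = exp C * exp C" using exp_add[of C C] by simp
    then show ?thesis by (simp add: exp_add exp_diff power2_eq_square)
  qed
  also have "A + B - 2 * C = (Phi (vp^2) + Phi (vm^2) - 2 * Phi (v^2)) + (vp + vm - 2 * v)"
    unfolding A_def B_def C_def by simp
  also have "sqrt vm * sqrt vp = sqrt (vp * vm)" by (simp add: real_sqrt_mult)
  finally have h: "besselI2 vm * besselI2 vp / (besselI2 v)^2 =
    exp ((Phi (vp^2) + Phi (vm^2) - 2 * Phi (v^2)) + (vp + vm - 2 * v)) * (v / sqrt (vp * vm))" .
  have e: "exp ((Phi (vp^2) + Phi (vm^2) - 2 * Phi (v^2)) + (vp + vm - 2 * v)) =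
    exp (Phi (vp^2) + Phi (vm^2) - 2 * Phi (v^2)) * exp (vp + vm - 2 * v)" by (rule exp_add)
  show ?thesis unfolding h e by (rule mult.commute)
qed


lemma dphi_upper:
  assumes c: "0 < c" and vm: "186 \<le> vm" "vm^2 = v^2 - c" and vp: "0 < vp" "vp^2 = v^2 + c"
  shows "Phi (v^2 + c) + Phi (v^2 - c) - 2 * Phi (v^2) \<le> (-(45/32)/vp^5) * c^2"
proof (rule second_diff_upper[OF c])
  fix t assume t: "v^2 - c \<le> t" "t \<le> v^2 + c"
  have vm0: "0 < vm" using vm by simp
  have t0: "0 < t" using t vm vm0 by (metis order_less_le_trans zero_less_power)
  show "(Phi has_real_derivative PhiB t) (at t)" by (rule Phi_deriv[OF t0])
  show "(PhiB has_real_derivative PhiC t) (at t)" by (rule PhiB_deriv[OF t0])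
  have "vm \<le> sqrt t" using t vm vm0 by (metis real_le_rsqrt)
  then have s1: "186 \<le> sqrt t" using vm by simp
  have s2: "sqrt t \<le> vp" using t vp by (metis real_sqrt_le_iff real_sqrt_unique less_imp_le)
  have "PhiC t \<le> -(45/32)/(sqrt t)^5" by (rule PhiC_upper[OF s1])
  also have "\<dots> \<le> -(45/32)/vp^5"
  proof -
    have "(sqrt t)^5 \<le> vp^5" using s1 s2 t0 by (intro power_mono) auto
    then have "1/vp^5 \<le> 1/(sqrt t)^5" using s1 t0 vp by (intro divide_left_mono) auto
    then show ?thesis by simp
  qed
  finally show "PhiC t \<le> -(45/32)/vp^5" .
qed

lemma dphi_lower:
  assumes c: "0 < c" and vm: "186 \<le> vm" "vm^2 = v^2 - c" and vp: "0 < vp" "vp^2 = v^2 + c"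
  shows "(-2/vm^5) * c^2 \<le> Phi (v^2 + c) + Phi (v^2 - c) - 2 * Phi (v^2)"
proof (rule second_diff_lower[OF c])
  fix t assume t: "v^2 - c \<le> t" "t \<le> v^2 + c"
  have vm0: "0 < vm" using vm by simp
  have t0: "0 < t" using t vm vm0 by (metis order_less_le_trans zero_less_power)
  show "(Phi has_real_derivative PhiB t) (at t)" by (rule Phi_deriv[OF t0])
  show "(PhiB has_real_derivative PhiC t) (at t)" by (rule PhiB_deriv[OF t0])
  have s2: "vm \<le> sqrt t" using t vm vm0 by (metis real_le_rsqrt)
  then have s1: "186 \<le> sqrt t" using vm by simp
  have "-2/vm^5 \<le> -2/(sqrt t)^5"
  proof -
    have "vm^5 \<le> (sqrt t)^5" using s2 vm0 by (intro power_mono) auto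
    then have "1/(sqrt t)^5 \<le> 1/vm^5" using vm0 t0 by (intro divide_left_mono) auto
    then show ?thesis by simp
  qed
  also have "\<dots> \<le> PhiC t" by (rule PhiC_lower[OF s1])
  finally show "-2/vm^5 \<le> PhiC t" .
qed




lemma setup_facts:
  fixes n :: nat
  assumes "n \<ge> 2363"
  defines "v \<equiv> pi * sqrt (3 * real n / 2)"
      and "vp \<equiv> pi * sqrt (3 * (real n + 1) / 2)"
      and "vm \<equiv> pi * sqrt (3 * (real n - 1) / 2)"
      and "c \<equiv> 3 * pi^2 / 2"
  shows "v^2 = c * real n" "vp^2 = v^2 + c" "vm^2 = v^2 - c" "0 < v" "0 < vp" "0 < vm"
    "14.8 \<le> c" "c \<le> 14.81" "186 \<le> vm" "186 \<le> v"
proof -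
  have N: "2363 \<le> real n" using assms(1) by simp
  have pa: "3141592653588 / 1000000000000 \<le> pi" "pi \<le> 31415926535899 / 10000000000000"
    using pi_approx by simp_all
  have p1: "31415/10000 \<le> pi" "pi \<le> 31416/10000" using pa by linarith+
  have "(31415/10000::real) * (31415/10000) \<le> pi * pi" by (rule mult_mono) (use p1 in auto)
  then have "986902225/100000000 \<le> pi^2" by (simp add: power2_eq_square)
  then show c1: "14.8 \<le> c" unfolding c_def by simp
  have "pi * pi \<le> (31416/10000::real) * (31416/10000)" by (rule mult_mono) (use p1 in auto)
  then have "pi^2 \<le> 986965056/100000000" by (simp add: power2_eq_square)
  then show c2: "c \<le> 14.81" unfolding c_def by simp
  show v2: "v^2 = c * real n" unfolding v_def c_def using N by (simp add: power_mult_distrib)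
  show "vp^2 = v^2 + c" unfolding v2 unfolding vp_def c_def using N by (simp add: power_mult_distrib algebra_simps)
  show vm2: "vm^2 = v^2 - c" unfolding v2 unfolding vm_def c_def using N by (simp add: power_mult_distrib field_simps)
  show "0 < v" unfolding v_def using N by simp
  show "0 < vp" unfolding vp_def using N by simp
  show vm0: "0 < vm" unfolding vm_def using N by simp
  have "186^2 \<le> vm^2"
  proof -
    have "14.8 * 2362 \<le> c * (real n - 1)" by (rule mult_mono) (use c1 N in auto)
    then show ?thesis unfolding vm2 v2 by (simp add: algebra_simps)
  qed
  then show "186 \<le> vm" by (rule power2_le_imp_le) (use vm0 in simp)
  have "186^2 \<le> v^2"
  proof -
    have "14.8 * 2363 \<le> c * real n" by (rule mult_mono) (use c1 N in auto)
    then show ?thesis unfolding v2 by simp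
  qed
  moreover have "0 \<le> v" unfolding v_def using N by simp
  ultimately show "186 \<le> v" by (rule power2_le_imp_le)
qed


lemma core_d:
  fixes v vp vm c N :: real
  assumes v2: "v^2 = c * N" and vp2: "vp^2 = v^2 + c" and vm2: "vm^2 = v^2 - c"
    and pos: "0 < v" "0 < vp" "0 < vm" and c1: "14.8 \<le> c" and c2: "c \<le> 14.81"
    and v186: "186 \<le> v" and N: "2363 \<le> N"
  shows "vp + vm - 2 * v \<le> - (c^2/4 * (1/v)^3)"
    and "- (c^2/4 * (1/v)^3) - (c^4/2) * (1/v)^7 \<le> vp + vm - 2 * v"
proof -
  define t where "t = 1/v"
  define e where "e = c / v^2"
  define p where "p = vp / v"
  define m where "m = vm / v"
  have c0: "0 < c" using c1 by simp
  have eN: "e = 1 / N" unfolding e_def v2 using c0 N by simp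
  have e0: "0 \<le> e" "e \<le> 1/2363" unfolding eN using N by (auto simp: field_simps)
  have et: "e = c * t^2" unfolding e_def t_def by (simp add: power_one_over)
  have p2: "p^2 = 1 + e" unfolding p_def e_def using pos by (simp add: power_divide vp2 field_simps)
  have m2: "m^2 = 1 - e" unfolding m_def e_def using pos by (simp add: power_divide vm2 field_simps)
  have p0: "0 \<le> p" "0 \<le> m" unfolding p_def m_def using pos by auto
  have deq: "vp + vm - 2 * v = v * (p + m - 2)" unfolding p_def m_def using pos by (simp add: field_simps)
  have ve2: "v * e^2 = c^2 * t^3" unfolding et t_def using pos by (simp add: field_simps power2_eq_square power3_eq_cube eval_nat_numeral)
  have ve4: "v * e^4 = c^4 * t^7" unfolding et t_def using pos by (simp add: field_simps eval_nat_numeral)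
  have "p + m \<le> 2 - e^2/4" by (rule pm_upper) (use p0 p2 m2 e0 in auto)
  then have "v * (p + m - 2) \<le> v * (-(e^2)/4)" using pos by (intro mult_left_mono) auto
  then show "vp + vm - 2 * v \<le> - (c^2/4 * (1/v)^3)" unfolding deq using ve2 unfolding t_def by simp
  have "2 - e^2/4 - e^4/2 \<le> p + m" by (rule pm_lower) (use p0 p2 m2 e0 in auto)
  then have "v * (-(e^2)/4 - e^4/2) \<le> v * (p + m - 2)" using pos by (intro mult_left_mono) auto
  then show "- (c^2/4 * (1/v)^3) - (c^4/2) * (1/v)^7 \<le> vp + vm - 2 * v"
    unfolding deq using ve2 ve4 unfolding t_def by (simp add: algebra_simps)
qed


lemma core_phi:
  fixes v vp vm c N :: real
  assumes v2: "v^2 = c * N" and vp2: "vp^2 = v^2 + c" and vm2: "vm^2 = v^2 - c"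
    and pos: "0 < v" "0 < vp" "0 < vm" and c1: "14.8 \<le> c" and c2: "c \<le> 14.81"
    and v186: "186 \<le> v" and vm186: "186 \<le> vm" and N: "2363 \<le> N"
  shows "Phi (v^2 + c) + Phi (v^2 - c) - 2 * Phi (v^2) \<le> -((45/32)*c^2) * (1/v)^5 + ((225/64)*c^3) * (1/v)^7"
    and "-490 * (1/v)^5 \<le> Phi (v^2 + c) + Phi (v^2 - c) - 2 * Phi (v^2)"
proof -
  define t where "t = 1/v"
  define e where "e = c / v^2"
  define p where "p = vp / v"
  define m where "m = vm / v"
  have c0: "0 < c" using c1 by simp
  have eN: "e = 1 / N" unfolding e_def v2 using c0 N by simp
  have e0: "0 \<le> e" "e \<le> 1/2363" unfolding eN using N by (auto simp: field_simps)
  have et: "e = c * t^2" unfolding e_def t_def by (simp add: power_one_over)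
  have p2: "p^2 = 1 + e" unfolding p_def e_def using pos by (simp add: power_divide vp2 field_simps)
  have m2: "m^2 = 1 - e" unfolding m_def e_def using pos by (simp add: power_divide vm2 field_simps)
  have p0: "0 < p" "0 < m" unfolding p_def m_def using pos by auto
  have t0: "0 < t" unfolding t_def using pos by simp
  have "Phi (v^2 + c) + Phi (v^2 - c) - 2 * Phi (v^2) \<le> (-(45/32)/vp^5) * c^2"
    by (rule dphi_upper[OF c0 vm186 vm2 pos(2) vp2])
  also have "(-(45/32)/vp^5) * c^2 = -((45/32)*c^2) * t^5 * (1/p^5)"
    unfolding p_def t_def using pos by (simp add: field_simps)
  also have "\<dots> \<le> -((45/32)*c^2) * t^5 * (1 - 5*e/2)"
  proof -
    have "p^5 * (1 - 5*e/2) \<le> (1 + e/2)^5 * (1 - 5*e/2)"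
      using p_upper[OF e0(1) p2] p0 e0 by (intro mult_right_mono power_mono) auto
    also have "\<dots> \<le> 1" by (rule bern5) (use e0 in auto)
    finally have "1 - 5*e/2 \<le> 1/p^5" using p0 by (simp add: field_simps)
    moreover have "-((45/32)*c^2) * t^5 \<le> 0" using t0 by simp
    ultimately show ?thesis by (rule mult_left_mono_neg)
  qed
  also have "\<dots> = -((45/32)*c^2) * t^5 + ((225/64)*c^3) * t^7"
    unfolding et by (simp add: field_simps eval_nat_numeral)
  finally show "Phi (v^2 + c) + Phi (v^2 - c) - 2 * Phi (v^2) \<le> -((45/32)*c^2) * (1/v)^5 + ((225/64)*c^3) * (1/v)^7"
    unfolding t_def .
  have "-490 * t^5 \<le> (-2 * c^2 * (1/m^5)) * t^5"
  proof -
    have "1 - e \<le> m" by (rule m_lower) (use e0 p0 m2 in auto)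
    then have "(1 - e)^5 \<le> m^5" using e0 by (intro power_mono) auto
    moreover have "1 - 5*e \<le> (1 - e)^5" by (rule bern5m) (use e0 in auto)
    ultimately have "99/100 \<le> m^5" using e0 by linarith
    then have "1/m^5 \<le> 100/99" using p0 by (simp add: field_simps)
    moreover have "c^2 \<le> 14.81^2" using c0 c2 by (intro power_mono) auto
    ultimately have "c^2 * (1/m^5) \<le> 14.81^2 * (100/99)" using p0
      by (intro mult_mono) auto
    moreover have "(14.81::real)^2 * (100/99) \<le> 222" by (simp add: power2_eq_square)
    ultimately have "c^2 * (1/m^5) \<le> 222" by linarith
    then have "-490 \<le> -2 * (c^2 * (1/m^5))" by linarith
    then have "-490 \<le> -2 * c^2 * (1/m^5)" by (simp only: mult.assoc)
    then show ?thesis using t0 by (intro mult_right_mono) auto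
  qed
  also have "(-2 * c^2 * (1/m^5)) * t^5 = (-2/vm^5) * c^2"
    unfolding m_def t_def using pos by (simp add: field_simps)
  also have "\<dots> \<le> Phi (v^2 + c) + Phi (v^2 - c) - 2 * Phi (v^2)"
    by (rule dphi_lower[OF c0 vm186 vm2 pos(2) vp2])
  finally show "-490 * (1/v)^5 \<le> Phi (v^2 + c) + Phi (v^2 - c) - 2 * Phi (v^2)" unfolding t_def .
qed


lemma core_final:
  fixes v vp vm c N :: real
  assumes v2: "v^2 = c * N" and vp2: "vp^2 = v^2 + c" and vm2: "vm^2 = v^2 - c"
    and pos: "0 < v" "0 < vp" "0 < vm" and c1: "14.8 \<le> c" and c2: "c \<le> 14.81"
    and v186: "186 \<le> v" and vm186: "186 \<le> vm" and N: "2363 \<le> N"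
  defines "Y \<equiv> exp (Phi (v^2 + c) + Phi (v^2 - c) - 2 * Phi (v^2)) * exp (vp + vm - 2 * v)"
  shows "Y \<le> (1 - c^2/4 * (1/v)^3 + (c^2/4 * (1/v)^3)^2) * (1 - 308*(1/v)^5 - 286*(1/v)^6)"
    and "(1 - c^2/4 * (1/v)^3 - c^3*(1/v)^5 - (5/128)*c^4*(1/v)^7) * (1 - 309*(1/v)^5 - 535*(1/v)^6) \<le> Y"
proof -
  define t where "t = 1/v"
  define a where "a = c^2/4 * t^3"
  define P where "P = Phi (v^2 + c) + Phi (v^2 - c) - 2 * Phi (v^2)"
  define d where "d = vp + vm - 2 * v"
  define beta where "beta = (45/32)*c^2"
  define gamma where "gamma = (225/64)*c^3"
  define B where "B = -beta * t^5 + gamma * t^7"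
  define k where "k = c^4/2"
  have t: "0 < t" "t \<le> 1/186" unfolding t_def using v186 by (auto simp: field_simps)
  note tp = tpow[OF t]
  have t3: "t^3 \<le> 1/186^3" using t by (intro power_mono[of t "1/186" 3, simplified power_one_over]) auto
  have t3': "0 \<le> t^3" using t by simp
  have dU: "d \<le> -a" using core_d(1)[OF v2 vp2 vm2 pos c1 c2 v186 N] unfolding d_def a_def t_def .
  have dL: "-a - k * t^7 \<le> d" using core_d(2)[OF v2 vp2 vm2 pos c1 c2 v186 N] unfolding d_def a_def t_def k_def .
  have PU: "P \<le> B" using core_phi(1)[OF v2 vp2 vm2 pos c1 c2 v186 vm186 N] unfolding P_def B_def beta_def gamma_def t_def .
  have PL: "-490 * t^5 \<le> P" using core_phi(2)[OF v2 vp2 vm2 pos c1 c2 v186 vm186 N] unfolding P_def t_def .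
  have c0: "0 \<le> c" using c1 by simp
  have cc1: "14.8^2 \<le> c^2" "c^2 \<le> 14.81^2" using c0 c1 c2 by (auto intro: power_mono)
  have cc3: "14.8^3 \<le> c^3" "c^3 \<le> 14.81^3" using c0 c1 c2 by (auto intro: power_mono)
  have cc4: "c^4 \<le> 14.81^4" using c0 c2 by (auto intro: power_mono)
  have be: "308 \<le> beta" "beta \<le> 309" unfolding beta_def using cc1 by (simp_all add: power2_eq_square)
  have ga: "0 \<le> gamma" "gamma \<le> 11500" unfolding gamma_def using cc3 c0 by (simp_all add: power3_eq_cube)
  have kk: "0 \<le> k" "k \<le> 25000" unfolding k_def using cc4 c0 by (simp_all add: eval_nat_numeral)
  have a_lo: "54 * t^3 \<le> a" unfolding a_def using cc1 t3' by (intro mult_right_mono) (auto simp: power2_eq_square)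
  have a_hi: "a \<le> 1/2"
  proof -
    have "a \<le> (14.81^2/4) * (1/186^3)" unfolding a_def using cc1 t3 t3' by (intro mult_mono) auto
    then show ?thesis by (simp add: power2_eq_square power3_eq_cube)
  qed
  have a0: "0 \<le> a" using a_lo t3' by linarith
  have bt5: "308 * t^5 \<le> beta * t^5" using be tp by (intro mult_right_mono) auto
  have bt5': "beta * t^5 \<le> 309 * t^5" using be tp by (intro mult_right_mono) auto
  have gt7: "gamma * t^7 \<le> 11500 * t^7" using ga tp by (intro mult_right_mono) auto
  have gt7': "0 \<le> gamma * t^7" using ga tp by simp
  have kt7: "k * t^7 \<le> 25000 * t^7" using kk tp by (intro mult_right_mono) auto
  have kt7': "0 \<le> k * t^7" using kk tp by simp
  have B0: "B \<le> 0" unfolding B_def using bt5 gt7 tp by linarith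
  have Bm1: "-1 \<le> B" unfolding B_def using bt5' gt7' tp by linarith
  have dm1: "-1 \<le> d" using dL a_hi kt7 tp by linarith
  have e1: "exp P \<le> 1 + B + B^2/2"
  proof -
    have "exp P \<le> exp B" using PU by simp
    also have "\<dots> \<le> 1 + B + B^2/2" by (rule exp_le_quad[OF B0])
    finally show ?thesis .
  qed
  have e2: "exp d \<le> 1 - a + a^2/2"
  proof -
    have "exp d \<le> 1 + d + d^2/2" by (rule exp_le_quad) (use dU a0 in linarith)
    also have "\<dots> \<le> 1 - a + a^2/2" by (rule quad_mono[OF dm1 dU]) (use a_hi in linarith)
    finally show ?thesis .
  qed
  have q0: "0 \<le> 1 + B + B^2/2"
  proof -
    have "0 \<le> B^2" by simp
    then show ?thesis using Bm1 by linarith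
  qed
  have "exp P * exp d \<le> (1 + B + B^2/2) * (1 - a + a^2/2)"
    using e1 e2 q0 by (intro mult_mono) auto
  also have "\<dots> = (1 - a + a^2/2) * (1 + B + B^2/2)" by simp
  also have "\<dots> \<le> (1 - a + a^2) * (1 - 308*t^5 - 286*t^6)"
    by (rule UF[OF t a_lo a_hi be ga B_def B0])
  finally show "Y \<le> (1 - c^2/4 * (1/v)^3 + (c^2/4 * (1/v)^3)^2) * (1 - 308*(1/v)^5 - 286*(1/v)^6)"
    unfolding Y_def P_def[symmetric] d_def[symmetric] a_def t_def .
  have f1: "1 - 490 * t^5 \<le> exp P" using exp_ge_add_one_self[of P] PL by linarith
  have f2: "1 - a - k * t^7 \<le> exp d" using exp_ge_add_one_self[of d] dL by linarith
  have f3: "0 \<le> 1 - a - k * t^7" using a_hi kt7 tp by linarith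
  have "(1 - 490 * t^5) * (1 - a - k * t^7) \<le> exp P * exp d"
    using f1 f2 f3 by (intro mult_mono) auto
  moreover have "(1 - a - c^3*t^5 - (5/128)*c^4*t^7) * (1 - 309*t^5 - 535*t^6) \<le> (1 - a - k*t^7) * (1 - 490*t^5)"
    by (rule LF[OF t a0 a_hi kk]) (use cc3 c0 in \<open>auto simp: power3_eq_cube\<close>)
  ultimately show "(1 - c^2/4 * (1/v)^3 - c^3*(1/v)^5 - (5/128)*c^4*(1/v)^7) * (1 - 309*(1/v)^5 - 535*(1/v)^6) \<le> Y"
    unfolding Y_def P_def[symmetric] d_def[symmetric] a_def[symmetric] t_def[symmetric] by (simp add: mult.commute)
qed


theorem lemma4p2:
  fixes n :: nat
  assumes "n \<ge> 2363"
  defines "v \<equiv> pi * sqrt (3 * real n / 2)"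
      and "vp \<equiv> pi * sqrt (3 * (real n + 1) / 2)"
      and "vm \<equiv> pi * sqrt (3 * (real n - 1) / 2)"
  defines "Xi \<equiv> (1 - 9 * pi ^ 4 / (16 * v ^ 3) - 27 * pi ^ 6 / (8 * v ^ 5)
                   - 405 * pi ^ 8 / (2048 * v ^ 7))
                * (1 - 309 / v ^ 5 - 535 / v ^ 6)"
      and "Psi \<equiv> (1 - 9 * pi ^ 4 / (16 * v ^ 3) + 81 * pi ^ 8 / (256 * v ^ 6))
                * (1 - 308 / v ^ 5 - 286 / v ^ 6)"
  shows "v / sqrt (vp * vm) * Xi \<le> besselI2 vm * besselI2 vp / (besselI2 v) ^ 2
       \<and> besselI2 vm * besselI2 vp / (besselI2 v) ^ 2 \<le> v / sqrt (vp * vm) * Psi"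
proof -
  define c where "c = 3 * pi^2 / 2"
  note S = setup_facts[OF assms(1), folded v_def vp_def vm_def c_def]
  have N: "2363 \<le> real n" using assms(1) by simp
  define Y where "Y = exp (Phi (v^2 + c) + Phi (v^2 - c) - 2 * Phi (v^2)) * exp (vp + vm - 2 * v)"
  note F = core_final[OF S(1) S(2) S(3) S(4) S(5) S(6) S(7) S(8) S(10) S(9) N, folded Y_def]
  have R: "besselI2 vm * besselI2 vp / (besselI2 v) ^ 2 = v / sqrt (vp * vm) * Y"
    unfolding Y_def using ratio_eq[OF S(6) S(5) S(4)] unfolding S(2) S(3) .
  have Psi_eq: "Psi = (1 - c^2/4 * (1/v)^3 + (c^2/4 * (1/v)^3)^2) * (1 - 308*(1/v)^5 - 286*(1/v)^6)"
    unfolding Psi_def c_def by (simp add: power_one_over field_simps eval_nat_numeral)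
  have Xi_eq: "Xi = (1 - c^2/4 * (1/v)^3 - c^3*(1/v)^5 - (5/128)*c^4*(1/v)^7) * (1 - 309*(1/v)^5 - 535*(1/v)^6)"
    unfolding Xi_def c_def by (simp add: power_one_over field_simps eval_nat_numeral)
  have K: "0 \<le> v / sqrt (vp * vm)" using S(4) S(5) S(6) by simp
  show ?thesis unfolding R
  proof
    show "v / sqrt (vp * vm) * Xi \<le> v / sqrt (vp * vm) * Y"
      unfolding Xi_eq by (rule mult_left_mono[OF F(2) K])
    show "v / sqrt (vp * vm) * Y \<le> v / sqrt (vp * vm) * Psi"
      unfolding Psi_eq by (rule mult_left_mono[OF F(1) K])
  qed
qed


end
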